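(* Let $d\ge 3$, let $q$ be a prime power, let $2\le k\le d/2$, and let $G$ be a group with $\mathrm{PSL}_d(q)\trianglelefteq G\le \mathrm{P}\Gamma\mathrm{L}_d(q)$, acting naturally on the set of $k$-dimensional subspaces of $\mathbb{F}_q^d$. Then $G$ is not $\mathrm{IBIS}$.
   Context: A base of a permutation group $G$ on $\Omega$ is a sequence $(\omega_1,\dots,\omega_\ell)$ of points with trivial pointwise stabilizer; it is irredundant if $G>G_{\omega_1}>\cdots>G_{\omega_1,\dots,\omega_\ell}=1$. $G$ is $\mathrm{IBIS}$ if all irredundant bases of $G$ have the same cardinality. *)

theory Defs
  imports "HOL-Analysis.Analysis" "HOL-Algebra.Bij" "HOL-Algebra.Coset"
begin

text \<open>Permutation groups on a set Omega are represented as subgroups of the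
  HOL-Algebra group BijGroup Omega (bijections of Omega, extensional outside Omega).\<close>

definition pw_stab :: "('a \<Rightarrow> 'a) set \<Rightarrow> 'a list \<Rightarrow> ('a \<Rightarrow> 'a) set" where
  "pw_stab G b = {g \<in> G. \<forall>w \<in> set b. g w = w}"

text \<open>A base: sequence of points of Omega with trivial pointwise stabilizer.\<close>
definition is_base :: "'a set \<Rightarrow> ('a \<Rightarrow> 'a) set \<Rightarrow> 'a list \<Rightarrow> bool" where
  "is_base \<Omega> G b \<longleftrightarrow> set b \<subseteq> \<Omega> \<and> pw_stab G b = {\<one>\<^bsub>BijGroup \<Omega>\<^esub>}"

text \<open>Irredundant base: G > G_w1 > G_w1w2 > ... > G_w1..wl = 1.\<close>
definition irredundant_base :: "'a set \<Rightarrow> ('a \<Rightarrow> 'a) set \<Rightarrow> 'a list \<Rightarrow> bool" where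
  "irredundant_base \<Omega> G b \<longleftrightarrow> is_base \<Omega> G b \<and>
     (\<forall>i < length b. pw_stab G (take (Suc i) b) \<subset> pw_stab G (take i b))"

definition IBIS :: "'a set \<Rightarrow> ('a \<Rightarrow> 'a) set \<Rightarrow> bool" where
  "IBIS \<Omega> G \<longleftrightarrow> (\<forall>b c. irredundant_base \<Omega> G b \<and> irredundant_base \<Omega> G c \<longrightarrow> length b = length c)"

text \<open>Field automorphisms and semilinear bijections of 'f^'n (the group GammaL).\<close>
definition field_aut :: "('f::field \<Rightarrow> 'f) \<Rightarrow> bool" where
  "field_aut \<sigma> \<longleftrightarrow> bij \<sigma> \<and> (\<forall>a b. \<sigma> (a + b) = \<sigma> a + \<sigma> b) \<and> (\<forall>a b. \<sigma> (a * b) = \<sigma> a * \<sigma> b)"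

definition semilinear_bij :: "('f::field ^'n \<Rightarrow> 'f ^'n) \<Rightarrow> bool" where
  "semilinear_bij g \<longleftrightarrow> bij g \<and> (\<forall>x y. g (x + y) = g x + g y) \<and>
     (\<exists>\<sigma>. field_aut \<sigma> \<and> (\<forall>c x. g (c *s x) = \<sigma> c *s g x))"

text \<open>The set of k-dimensional subspaces of 'f^'n.\<close>
definition k_subspaces :: "nat \<Rightarrow> ('f::field ^'n) set set" where
  "k_subspaces k = {W. vec.subspace W \<and> vec.dim W = k}"

text \<open>Induced permutation of a map g on the set Omega of subspaces.\<close>
definition induced_perm :: "('f::field ^'n) set set \<Rightarrow> ('f ^'n \<Rightarrow> 'f ^'n)
    \<Rightarrow> ('f ^'n) set \<Rightarrow> ('f ^'n) set" where
  "induced_perm \<Omega> g = (\<lambda>W \<in> \<Omega>. g ` W)"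

text \<open>PGammaL_d(q) and PSL_d(q) as permutation groups on the k-subspaces.\<close>
definition PGammaL_on :: "nat \<Rightarrow> (('f::field ^'n) set \<Rightarrow> ('f ^'n) set) set" where
  "PGammaL_on k = {induced_perm (k_subspaces k) g | g. semilinear_bij g}"

definition PSL_on :: "nat \<Rightarrow> (('f::field ^'n) set \<Rightarrow> ('f ^'n) set) set" where
  "PSL_on k = {induced_perm (k_subspaces k) (\<lambda>x. A *v x) | A :: 'f^'n^'n. det A = 1}"

end

theory Submission
  imports Defs
begin


fun pr :: "('a \<Rightarrow> 'a) set \<Rightarrow> 'a list \<Rightarrow> 'a list" where
  "pr H [] = []"
| "pr H (y # ys) = (if {g \<in> H. g y = y} \<subset> H then y # pr {g \<in> H. g y = y} ys else pr H ys)"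

lemma pw_stab_append: "pw_stab G (xs @ ys) = {g \<in> pw_stab G xs. \<forall>w\<in>set ys. g w = w}"
  by (auto simp: pw_stab_def)

lemma pw_stab_Nil[simp]: "pw_stab G [] = G"
  by (auto simp: pw_stab_def)

lemma pr_set: "set (pr H ys) \<subseteq> set ys"
  by (induction H ys rule: pr.induct) auto

lemma pr_length: "length (pr H ys) \<le> length ys"
  by (induction H ys rule: pr.induct) auto

lemma pr_stab: "H = pw_stab G acc \<Longrightarrow> pw_stab G (acc @ pr H ys) = pw_stab G (acc @ ys)"
proof (induction H ys arbitrary: acc rule: pr.induct)
  case (1 H)
  then show ?case by simp
next
  case (2 H y ys)
  show ?case
  proof (cases "{g \<in> H. g y = y} \<subset> H")
    case True
    have "{g \<in> H. g y = y} = pw_stab G (acc @ [y])" using 2(3) by (auto simp: pw_stab_def)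
    from 2(1)[OF True this] True show ?thesis by simp
  next
    case False
    then have eq: "{g \<in> H. g y = y} = H" by auto
    have "pw_stab G (acc @ pr H ys) = pw_stab G (acc @ ys)" using 2(2)[OF False 2(3)] .
    also have "\<dots> = pw_stab G (acc @ y # ys)"
      using eq 2(3) by (auto simp: pw_stab_def)
    finally show ?thesis using False by simp
  qed
qed

definition chain :: "('a \<Rightarrow> 'a) set \<Rightarrow> 'a list \<Rightarrow> bool" where
  "chain G b \<longleftrightarrow> (\<forall>i < length b. pw_stab G (take (Suc i) b) \<subset> pw_stab G (take i b))"

lemma chain_snoc:
  assumes "chain G acc" "pw_stab G (acc @ [y]) \<subset> pw_stab G acc"
  shows "chain G (acc @ [y])"
  unfolding chain_def
proof (intro allI impI)
  fix i assume i: "i < length (acc @ [y])"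
  show "pw_stab G (take (Suc i) (acc @ [y])) \<subset> pw_stab G (take i (acc @ [y]))"
  proof (cases "i < length acc")
    case True
    then show ?thesis using assms(1) unfolding chain_def by simp
  next
    case False
    then have "i = length acc" using i by simp
    then show ?thesis using assms(2) by simp
  qed
qed

lemma pr_chain: "H = pw_stab G acc \<Longrightarrow> chain G acc \<Longrightarrow> chain G (acc @ pr H ys)"
proof (induction H ys arbitrary: acc rule: pr.induct)
  case (1 H)
  then show ?case by simp
next
  case (2 H y ys)
  show ?case
  proof (cases "{g \<in> H. g y = y} \<subset> H")
    case True
    have e: "{g \<in> H. g y = y} = pw_stab G (acc @ [y])" using 2(3) by (auto simp: pw_stab_def)
    have "chain G (acc @ [y])" using chain_snoc[OF 2(4)] True e 2(3) by simp
    from 2(1)[OF True e this] True show ?thesis by simp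
  next
    case False
    then show ?thesis using 2 by simp
  qed
qed

lemma pr_append: "pr H (xs @ ys) = pr H xs @ pr {g \<in> H. \<forall>w\<in>set xs. g w = w} ys"
proof (induction xs arbitrary: H)
  case Nil
  then show ?case by simp
next
  case (Cons x xs)
  show ?case
  proof (cases "{g \<in> H. g x = x} \<subset> H")
    case True
    have e: "{g \<in> {g \<in> H. g x = x}. \<forall>w\<in>set xs. g w = w} = {g \<in> H. \<forall>w\<in>set (x#xs). g w = w}" by auto
    show ?thesis using True Cons[of "{g \<in> H. g x = x}"] e by simp
  next
    case False
    then have eq: "{g \<in> H. g x = x} = H" by auto
    have e: "{g \<in> H. \<forall>w\<in>set xs. g w = w} = {g \<in> H. \<forall>w\<in>set (x#xs). g w = w}"
      using eq by auto
    show ?thesis using False Cons[of H] e by simp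
  qed
qed

lemma pr_strict:
  assumes "H = pw_stab G acc"
    and "\<forall>i < length c. pw_stab G (acc @ take (Suc i) c) \<subset> pw_stab G (acc @ take i c)"
  shows "pr H c = c"
  using assms
proof (induction c arbitrary: acc H)
  case Nil
  then show ?case by simp
next
  case (Cons y ys)
  have s: "pw_stab G (acc @ [y]) \<subset> pw_stab G acc" using Cons(3)[rule_format, of 0] by simp
  have e: "{g \<in> H. g y = y} = pw_stab G (acc @ [y])" using Cons(2) by (auto simp: pw_stab_def)
  have "\<forall>i < length ys. pw_stab G ((acc @ [y]) @ take (Suc i) ys) \<subset> pw_stab G ((acc @ [y]) @ take i ys)"
    using Cons(3) by (metis Suc_less_eq append.assoc append_Cons append_Nil length_Cons take_Suc_Cons)
  from Cons(1)[OF e this] s e Cons(2) show ?case by simp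
qed

lemma not_IBIS_abs:
  assumes base: "pw_stab G (F @ E) = {\<one>\<^bsub>BijGroup \<Omega>\<^esub>}"
    and sub: "set (x # F @ E) \<subseteq> \<Omega>"
    and strict: "\<forall>i < length (x # F). pw_stab G (take (Suc i) (x # F)) \<subset> pw_stab G (take i (x # F))"
    and fixx: "\<forall>g \<in> pw_stab G F. g x = x"
  shows "\<not> IBIS \<Omega> G"
proof -
  define H1 where "H1 = {g \<in> G. \<forall>w\<in>set F. g w = w}"
  define b1 where "b1 = pr G (F @ E)"
  define b2 where "b2 = pr G ((x # F) @ E)"
  have one_x: "\<one>\<^bsub>BijGroup \<Omega>\<^esub> x = x" using sub by (simp add: BijGroup_def)
  have ib1: "irredundant_base \<Omega> G b1"
    unfolding irredundant_base_def is_base_def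
  proof (intro conjI)
    have "set b1 \<subseteq> set (F @ E)" unfolding b1_def by (rule pr_set)
    then show "set b1 \<subseteq> \<Omega>" using sub by auto
    show "pw_stab G b1 = {\<one>\<^bsub>BijGroup \<Omega>\<^esub>}"
      using pr_stab[of G G "[]" "F @ E"] base unfolding b1_def by simp
    show "\<forall>i<length b1. pw_stab G (take (Suc i) b1) \<subset> pw_stab G (take i b1)"
      using pr_chain[of G G "[]" "F @ E"] unfolding b1_def chain_def by simp
  qed
  have ib2: "irredundant_base \<Omega> G b2"
    unfolding irredundant_base_def is_base_def
  proof (intro conjI)
    have "set b2 \<subseteq> set ((x # F) @ E)" unfolding b2_def by (rule pr_set)
    then show "set b2 \<subseteq> \<Omega>" using sub by auto
    have "pw_stab G ((x # F) @ E) = {g \<in> pw_stab G (F @ E). g x = x}"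
      by (auto simp: pw_stab_def)
    also have "\<dots> = {\<one>\<^bsub>BijGroup \<Omega>\<^esub>}" using base one_x by auto
    finally show "pw_stab G b2 = {\<one>\<^bsub>BijGroup \<Omega>\<^esub>}"
      using pr_stab[of G G "[]" "(x # F) @ E"] unfolding b2_def by simp
    show "\<forall>i<length b2. pw_stab G (take (Suc i) b2) \<subset> pw_stab G (take i b2)"
      using pr_chain[of G G "[]" "(x # F) @ E"] unfolding b2_def chain_def by simp
  qed
  have l1: "length b1 \<le> length F + length (pr H1 E)"
    unfolding b1_def H1_def pr_append using pr_length[of G F] by simp
  have "pr G (x # F) = x # F"
    using pr_strict[of G G "[]" "x # F"] strict by simp
  moreover have "{g \<in> G. \<forall>w\<in>set (x # F). g w = w} = H1"
    using fixx unfolding H1_def pw_stab_def by auto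
  ultimately have l2: "length b2 = Suc (length F + length (pr H1 E))"
    unfolding b2_def pr_append by simp
  have "length b1 \<noteq> length b2" using l1 l2 by simp
  then show ?thesis using ib1 ib2 unfolding IBIS_def by blast
qed



definition ES :: "'n set \<Rightarrow> ('f::field ^'n) set" where
  "ES S = vec.span ((\<lambda>i. axis i 1) ` S)"

lemma ES_coord:
  assumes "x \<in> ES S" "j \<notin> S"
  shows "x $ j = (0::'f::field)"
proof -
  have "ES S \<subseteq> {x. x $ j = (0::'f)}"
    unfolding ES_def
    by (rule vec.span_minimal) (auto simp: vec.subspace_def axis_def assms(2))
  then show ?thesis using assms(1) by auto
qed

lemma ES_mem: "i \<in> S \<Longrightarrow> axis i 1 \<in> (ES S :: ('f::field ^'n) set)"
  unfolding ES_def by (rule vec.span_base) auto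

lemma indep_axis: "vec.independent ((\<lambda>i. axis i (1::'f::field)) ` (S :: 'n::finite set))"
  by (rule vec.independent_mono[OF independent_cart_basis]) (auto simp: cart_basis_def)

lemma card_axis: "card ((\<lambda>i. axis i (1::'f::field)) ` (S :: 'n::finite set)) = card S"
  by (rule card_image) (auto simp: inj_on_def axis_eq_axis)

lemma ES_k: "card S = k \<Longrightarrow> ES (S :: 'n::finite set) \<in> (k_subspaces k :: ('f::field ^'n) set set)"
proof -
  assume a: "card S = k"
  have "vec.dim (vec.span ((\<lambda>i. axis i (1::'f)) ` S)) = card ((\<lambda>i. axis i (1::'f)) ` S)"
    by (rule vec.dim_span_eq_card_independent[OF indep_axis])
  then show ?thesis unfolding k_subspaces_def ES_def using card_axis[of S] a by simp
qed

definition uv :: "'n set \<Rightarrow> 'n \<Rightarrow> 'f \<Rightarrow> ('f::field ^'n)" where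
  "uv Y pk a = (\<chi> i. if i \<in> Y then 0 else if i = pk then a else 1)"

definition PY :: "'n set \<Rightarrow> 'n \<Rightarrow> 'f \<Rightarrow> ('f::field ^'n) set" where
  "PY Y pk a = vec.span (insert (uv Y pk a) ((\<lambda>i. axis i 1) ` Y))"

lemma PY_pred:
  assumes "x \<in> PY Y pk a" "p0 \<notin> Y" "p0 \<noteq> pk" "i \<notin> Y"
  shows "x $ i = (if i = pk then a else 1) * x $ p0"
proof -
  let ?T = "{x. \<forall>i. i \<notin> Y \<longrightarrow> x $ i = (if i = pk then a else 1) * x $ p0}"
  have sub: "vec.subspace ?T"
    unfolding vec.subspace_def
  proof (intro conjI ballI allI)
    show "0 \<in> ?T" by simp
    fix x y assume "x \<in> ?T" "y \<in> ?T"
    then show "x + y \<in> ?T" by (simp add: distrib_left)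
  next
    fix c x assume "x \<in> ?T"
    then show "c *s x \<in> ?T" by (simp add: mult.left_commute)
  qed
  have base: "insert (uv Y pk a) ((\<lambda>i. axis i 1) ` Y) \<subseteq> ?T"
    using assms(2,3) by (auto simp: uv_def axis_def)
  have "PY Y pk a \<subseteq> ?T"
    unfolding PY_def by (rule vec.span_minimal[OF base sub])
  then have "x \<in> ?T" using assms(1) by blast
  then show ?thesis using assms(4) by blast
qed

lemma PY_k:
  assumes "card Y + 1 = k" "p0 \<notin> Y" "p0 \<noteq> pk"
  shows "PY (Y :: 'n::finite set) pk a \<in> (k_subspaces k :: ('f::field ^'n) set set)"
proof -
  have nin: "uv Y pk a \<notin> vec.span ((\<lambda>i. axis i (1::'f)) ` Y)"
  proof
    assume "uv Y pk a \<in> vec.span ((\<lambda>i. axis i (1::'f)) ` Y)"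
    then have "uv Y pk a $ p0 = 0" using ES_coord[of _ Y p0] assms unfolding ES_def by blast
    then show False using assms by (simp add: uv_def)
  qed
  have ind: "vec.independent (insert (uv Y pk a) ((\<lambda>i. axis i (1::'f)) ` Y))"
    by (rule vec.independent_insertI[OF nin indep_axis])
  have "uv Y pk a \<notin> (\<lambda>i. axis i (1::'f)) ` Y" using nin vec.span_base by metis
  then have "card (insert (uv Y pk a) ((\<lambda>i. axis i (1::'f)) ` Y)) = k"
  proof -
    have "card ((\<lambda>i. axis i (1::'f)) ` Y) = card Y" by (rule card_axis)
    then show ?thesis using assms(1) \<open>uv Y pk a \<notin> (\<lambda>i. axis i (1::'f)) ` Y\<close> by simp
  qed
  moreover have "vec.dim (vec.span (insert (uv Y pk a) ((\<lambda>i. axis i (1::'f)) ` Y))) = card (insert (uv Y pk a) ((\<lambda>i. axis i (1::'f)) ` Y))"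
    by (rule vec.dim_span_eq_card_independent[OF ind])
  ultimately show ?thesis
    unfolding k_subspaces_def PY_def by simp
qed

lemma PY_u: "uv Y pk a \<in> PY Y pk a"
  unfolding PY_def by (rule vec.span_base) auto

section \<open>Semilinear-type maps\<close>

lemma field_aut_0: "field_aut \<sigma> \<Longrightarrow> \<sigma> 0 = 0"
  unfolding field_aut_def by (metis add_cancel_right_right add_0)

lemma field_aut_1: "field_aut \<sigma> \<Longrightarrow> \<sigma> 1 = 1"
proof -
  assume a: "field_aut \<sigma>"
  then have "\<sigma> 1 \<noteq> \<sigma> 0" unfolding field_aut_def by (metis bij_def inj_eq zero_neq_one)
  then have "\<sigma> 1 \<noteq> 0" using field_aut_0[OF a] by simp
  moreover have "\<sigma> 1 = \<sigma> 1 * \<sigma> 1" using a unfolding field_aut_def by (metis mult_1)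
  ultimately show ?thesis by (metis mult_cancel_left2)
qed

lemma add_0_map:
  fixes g :: "'a::ab_group_add \<Rightarrow> 'b::ab_group_add"
  assumes "\<forall>x y. g (x + y) = g x + g y"
  shows "g 0 = 0"
  using assms by (metis add_cancel_right_right add_0)

lemma add_sum_map:
  fixes g :: "'a::ab_group_add \<Rightarrow> 'b::ab_group_add"
  assumes "\<forall>x y. g (x + y) = g x + g y"
  shows "g (sum f A) = sum (\<lambda>i. g (f i)) A"
proof (cases "finite A")
  case True
  then show ?thesis
    by (induction A rule: finite_induct) (auto simp: add_0_map[OF assms] assms)
next
  case False
  then show ?thesis by (simp add: add_0_map[OF assms])
qed

lemma span_image_semi:
  fixes g :: "'f::field ^'n \<Rightarrow> 'f ^'n"
  assumes add: "\<forall>x y. g (x + y) = g x + g y" and sc: "\<forall>c x. g (c *s x) = \<sigma> c *s g x"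
  shows "g ` vec.span B \<subseteq> vec.span (g ` B)"
proof -
  have "vec.span B \<subseteq> {x. g x \<in> vec.span (g ` B)}"
  proof (rule vec.span_minimal)
    show "B \<subseteq> {x. g x \<in> vec.span (g ` B)}" by (auto intro: vec.span_base)
    show "vec.subspace {x. g x \<in> vec.span (g ` B)}"
      unfolding vec.subspace_def
      using add_0_map[OF add] add sc by (auto intro: vec.span_add vec.span_scale vec.span_zero)
  qed
  then show ?thesis by auto
qed

lemma fin_fix:
  fixes g :: "'a::finite \<Rightarrow> 'a"
  assumes "inj g" "g ` W \<subseteq> W"
  shows "g ` W = W"
proof -
  have "card (g ` W) = card W" using assms(1) by (simp add: card_image inj_on_subset)
  then show ?thesis using assms(2) by (simp add: card_subset_eq)
qed

lemma diag_form:
  fixes g :: "'f::field ^'n::finite \<Rightarrow> 'f ^'n"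
  assumes add: "\<forall>x y. g (x + y) = g x + g y" and sc: "\<forall>c x. g (c *s x) = \<sigma> c *s g x"
    and d: "\<forall>i. g (axis i 1) = c i *s axis i 1"
  shows "g x = (\<chi> i. \<sigma> (x $ i) * c i)"
proof -
  have "g x = g (sum (\<lambda>i. (x$i) *s axis i 1) UNIV)" by (simp add: basis_expansion)
  also have "\<dots> = sum (\<lambda>i. g ((x$i) *s axis i 1)) UNIV" by (rule add_sum_map[OF add])
  also have "\<dots> = sum (\<lambda>i. (\<sigma> (x$i) * c i) *s axis i 1) UNIV" using sc d by simp
  also have "\<dots> = (\<chi> i. \<sigma> (x $ i) * c i)" using basis_expansion[of "(\<chi> i. \<sigma> (x $ i) * c i)"] by simp
  finally show ?thesis .
qed

section \<open>Transvections\<close>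

definition tvm :: "'n \<Rightarrow> 'n \<Rightarrow> 'f::field ^'n^'n" where
  "tvm a b = (\<chi> r. if r = a then row a (mat 1) + 1 *s row b (mat 1) else row r (mat 1))"

lemma tvm_det: "a \<noteq> b \<Longrightarrow> det (tvm a b :: 'f::field ^'n::finite^'n) = 1"
  unfolding tvm_def using det_row_operation[of a b "mat 1" 1] by simp

lemma tvm_entry: "(tvm a b :: 'f::field ^'n::finite^'n) $ r $ j =
   (if r = a then (if j = a then 1 else 0) + (if j = b then 1 else 0) else (if j = r then 1 else 0))"
  unfolding tvm_def by (simp add: row_def mat_def)

lemma tvm_apply: "(tvm a b *v x) = (\<chi> r. if r = a then x $ a + x $ b else (x :: 'f::field^'n::finite) $ r)"
proof -
  have "(tvm a b *v x) $ r = (if r = a then x $ a + x $ b else x $ r)" for r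
  proof -
    have "(tvm a b *v x) $ r = (\<Sum>j\<in>UNIV. (tvm a b)$r$j * x$j)"
      by (simp add: matrix_vector_mult_def)
    also have "\<dots> = (if r = a then x $ a + x $ b else x $ r)"
      by (simp add: tvm_entry distrib_right sum.distrib if_distrib[of "\<lambda>t. t * _"] cong: if_cong)
    finally show ?thesis .
  qed
  then show ?thesis by (simp add: vec_eq_iff)
qed



definition tvf :: "'n \<Rightarrow> 'n \<Rightarrow> 'f::field ^'n \<Rightarrow> 'f ^'n" where
  "tvf a b x = (\<chi> r. if r = a then x $ a + x $ b else x $ r)"

lemma tvf_add: "tvf a b (x + y) = tvf a b x + tvf a b y"
  by (simp add: tvf_def vec_eq_iff)

lemma tvf_scale: "tvf a b (c *s x) = id c *s tvf a b x"
  by (simp add: tvf_def vec_eq_iff distrib_left)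

lemma tvf_inj: "a \<noteq> b \<Longrightarrow> inj (tvf a (b::'n::finite) :: 'f::field ^'n \<Rightarrow> _)"
proof (rule injI)
  fix x y :: "'f ^'n"
  assume ab: "a \<noteq> b" and e: "tvf a b x = tvf a b y"
  have r: "r \<noteq> a \<Longrightarrow> x $ r = y $ r" for r using e by (simp add: tvf_def vec_eq_iff) (metis)
  have "x $ a + x $ b = y $ a + y $ b" using e by (simp add: tvf_def vec_eq_iff) (metis)
  then have "x $ a = y $ a" using r[of b] ab by simp
  then show "x = y" using r by (metis vec_eq_iff)
qed

lemma tvf_axis: "a \<noteq> b \<Longrightarrow> tvf a b (axis s (1::'f::field)) = (if s = b then axis b 1 + axis a 1 else axis s 1)"
  by (auto simp: tvf_def vec_eq_iff axis_def)

lemma tvf_sub: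
  assumes ab: "a \<noteq> b" and c: "b \<notin> S \<or> a \<in> S"
  shows "tvf a b ` ES S \<subseteq> (ES S :: ('f::field ^'n::finite) set)"
proof -
  have h1: "tvf a b ` ES S \<subseteq> vec.span (tvf a b ` (\<lambda>i. axis i (1::'f)) ` S)"
    unfolding ES_def
    by (rule span_image_semi[where \<sigma> = id]) (auto simp: tvf_add tvf_scale)
  have h2: "tvf a b ` (\<lambda>i. axis i (1::'f)) ` S \<subseteq> vec.span ((\<lambda>i. axis i (1::'f)) ` S)"
  proof
    fix v assume "v \<in> tvf a b ` (\<lambda>i. axis i (1::'f)) ` S"
    then obtain s where s: "s \<in> S" "v = tvf a b (axis s 1)" by auto
    show "v \<in> vec.span ((\<lambda>i. axis i (1::'f)) ` S)"
    proof (cases "s = b")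
      case True
      then have "a \<in> S" using c s by auto
      have "v = axis b 1 + axis a 1" using s True ab by (auto simp: tvf_def vec_eq_iff axis_def)
      then show ?thesis using s True \<open>a \<in> S\<close>
        by (metis image_eqI vec.span_add vec.span_base)
    next
      case False
      have "v = axis s 1" using s False ab by (auto simp: tvf_def vec_eq_iff axis_def)
      then show ?thesis using s by (auto intro!: vec.span_base)
    qed
  qed
  have h3: "vec.span (tvf a b ` (\<lambda>i. axis i (1::'f)) ` S) \<subseteq> ES S"
    unfolding ES_def by (rule vec.span_minimal[OF h2]) simp
  show ?thesis using h1 h3 by (rule subset_trans)
qed

lemma tvf_fix:
  assumes ab: "a \<noteq> b" and c: "b \<notin> S \<or> a \<in> S"
  shows "tvf a b ` ES S = (ES S :: ('f::{finite,field} ^'n::finite) set)"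
  by (rule fin_fix[OF tvf_inj[OF ab] tvf_sub[OF ab c]])

lemma tvf_move:
  assumes ab: "a \<noteq> b" and "b \<in> S" "a \<notin> S"
  shows "tvf a b ` ES S \<noteq> (ES S :: ('f::field ^'n::finite) set)"
proof
  assume e: "tvf a b ` ES S = (ES S :: ('f ^'n) set)"
  have m: "axis b 1 \<in> (ES S :: ('f ^'n) set)" by (rule ES_mem[OF assms(2)])
  have "tvf a b (axis b 1) \<in> (ES S :: ('f ^'n) set)" using imageI[OF m, of "tvf a b"] e by simp
  then have "tvf a b (axis b 1) $ a = (0::'f)" using ES_coord assms(3) by blast
  then show False using ab by (simp add: tvf_def axis_def)
qed

lemma tvg_in:
  assumes "a \<noteq> b"
  shows "induced_perm (k_subspaces k) (tvf a b) \<in> (PSL_on k :: (('f::field ^'n::finite) set \<Rightarrow> _) set)"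
proof -
  have "tvf a b = (\<lambda>x. (tvm a b :: 'f^'n^'n) *v x)"
    by (rule ext) (simp add: tvm_apply tvf_def)
  then show ?thesis unfolding PSL_on_def using tvm_det[OF assms] by auto
qed

lemma induced_apply: "W \<in> \<Omega> \<Longrightarrow> induced_perm \<Omega> g W = g ` W"
  by (simp add: induced_perm_def)

lemma diag_lemma:
  fixes g :: "'f::field ^'n::finite \<Rightarrow> 'f ^'n"
  assumes add: "\<forall>x y. g (x + y) = g x + g y"
    and sep: "\<And>i l. i \<noteq> l \<Longrightarrow> \<exists>S. g ` ES S = ES S \<and> i \<in> S \<and> l \<notin> S"
  shows "g (axis i 1) = (g (axis i 1) $ i) *s axis i 1"
proof -
  have "g (axis i 1) $ l = 0" if li: "l \<noteq> i" for l
  proof -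
    have "i \<noteq> l" using li by simp
    then obtain S where S: "g ` ES S = ES S" "i \<in> S" "l \<notin> S" using sep[of i l] by blast
    have "g (axis i 1) \<in> ES S" using S ES_mem[OF S(2)] by blast
    then show ?thesis using ES_coord S(3) by blast
  qed
  then show ?thesis by (auto simp: vec_eq_iff axis_def)
qed

lemma sl_parts:
  assumes "semilinear_bij g"
  obtains \<sigma> where "field_aut \<sigma>" "\<forall>x y. g (x + y) = g x + g y" "\<forall>c x. g (c *s x) = \<sigma> c *s g x" "inj g"
  using assms unfolding semilinear_bij_def bij_def by blast

lemma sl_scalar_fix:
  fixes g :: "'f::{finite,field} ^'n::finite \<Rightarrow> 'f ^'n"
  assumes "inj g" "\<forall>x. g x = c *s x" "vec.subspace W"
  shows "g ` W = W"
  by (rule fin_fix[OF assms(1)]) (use assms(2,3) vec.subspace_scale in auto)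



lemma strict_step:
  assumes "h \<in> pw_stab G L" "h w \<noteq> w"
  shows "pw_stab G (L @ [w]) \<subset> pw_stab G L"
  using assms by (auto simp: pw_stab_def)

lemma one_Bij: "\<one>\<^bsub>BijGroup S\<^esub> = (\<lambda>x\<in>S. x)"
  by (simp add: BijGroup_def)

lemma en_mem:
  fixes en :: "nat \<Rightarrow> 'b"
  assumes "inj_on en {0..<d}" "a < d" "A \<subseteq> {0..<d}"
  shows "en a \<in> en ` A \<longleftrightarrow> a \<in> A"
proof -
  have "a \<in> {0..<d}" using assms(2) by simp
  then show ?thesis using inj_on_image_mem_iff[OF assms(1) _ assms(3)] by blast
qed

theorem lemma3p4:
  fixes G :: "(('f::{finite,field} ^'n) set \<Rightarrow> ('f ^'n) set) set"
    and k :: nat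
  assumes "CARD('n) \<ge> 3"
    and "2 \<le> k" and "2 * k \<le> CARD('n)"
    and "subgroup G (BijGroup (k_subspaces k :: ('f ^'n) set set))"
    and "G \<subseteq> PGammaL_on k"
    and "PSL_on k \<subseteq> G"
    and "normal (PSL_on k) ((BijGroup (k_subspaces k :: ('f ^'n) set set))\<lparr>carrier := G\<rparr>)"
  shows "\<not> IBIS (k_subspaces k :: ('f ^'n) set set) G"
proof -
  define Om where "Om = (k_subspaces k :: ('f ^'n) set set)"
  define d where "d = CARD('n)"
  obtain en :: "nat \<Rightarrow> 'n" where en: "bij_betw en {0..<d} UNIV"
    using ex_bij_betw_nat_finite[of "UNIV :: 'n set"] unfolding d_def by auto
  have inj: "inj_on en {0..<d}" using en bij_betw_imp_inj_on by blast
  have surj: "en ` {0..<d} = UNIV" using en bij_betw_imp_surj_on by blast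
  have kd: "2 * k \<le> d" "2 \<le> k" using assms(2,3) unfolding d_def by auto
  have enI: "\<And>a b. a < d \<Longrightarrow> b < d \<Longrightarrow> en a = en b \<longleftrightarrow> a = b"
    using inj by (meson atLeastLessThan_iff inj_on_eq_iff le0)
  have all_en: "\<And>x. \<exists>a<d. x = en a" using surj by (metis atLeastLessThan_iff imageE UNIV_I)
  define K where "K = en ` {0..<k}"
  have memK: "\<And>a. a < d \<Longrightarrow> en a \<in> K \<longleftrightarrow> a < k"
    unfolding K_def using en_mem[OF inj] kd by auto
  have cardK: "card K = k" unfolding K_def
    using card_image[OF inj_on_subset[OF inj, of "{0..<k}"]] kd by auto
  define j1 where "j1 = en k"
  define j2 where "j2 = en (k+1)"
  define t1 where "t1 = en 0"
  define t2 where "t2 = en 1"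
  have j1K: "j1 \<notin> K" and j2K: "j2 \<notin> K" and t1K: "t1 \<in> K" and t2K: "t2 \<in> K"
    and j12: "j1 \<noteq> j2" and t12: "t1 \<noteq> t2"
    unfolding j1_def j2_def t1_def t2_def using memK enI kd by auto
  define Sp where "Sp = (\<lambda>p::'n\<times>'n. insert (snd p) (K - {fst p}))"
  obtain ps where ps: "set ps = K \<times> (UNIV - K)" "distinct ps"
  proof -
    have "finite (K \<times> (UNIV - K))" by simp
    from finite_distinct_list[OF this] show ?thesis using that by blast
  qed
  have cardSp: "card (Sp p) = k" if "p \<in> set ps" for p
  proof -
    have pK: "p \<in> K \<times> (UNIV - K)" using that ps(1) by blast
    then have a: "fst p \<in> K" and b: "snd p \<notin> K" by auto
    have c1: "card (K - {fst p}) = k - 1" using card_Diff_singleton[OF a] cardK by simp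
    have "snd p \<notin> K - {fst p}" using b by blast
    then have "card (insert (snd p) (K - {fst p})) = Suc (k - 1)" using c1 by simp
    then show ?thesis unfolding Sp_def using kd by simp
  qed
  have sep: "\<exists>p\<in>set ps. i \<in> Sp p \<and> l \<notin> Sp p" if il: "i \<noteq> l" for i l
  proof (cases "i \<in> K")
    case iK: True
    show ?thesis
    proof (cases "l \<in> K")
      case True
      then show ?thesis using iK il j1K ps by (intro bexI[of _ "(l, j1)"]) (auto simp: Sp_def)
    next
      case False
      obtain j where j: "j \<in> {j1, j2}" "j \<noteq> l" using j12 by auto
      obtain t where t: "t \<in> {t1, t2}" "t \<noteq> i" using t12 by auto
      have "j \<notin> K" "t \<in> K" using j t j1K j2K t1K t2K by auto
      then show ?thesis using iK False il j t ps by (intro bexI[of _ "(t, j)"]) (auto simp: Sp_def)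
    qed
  next
    case iK: False
    show ?thesis
    proof (cases "l \<in> K")
      case True
      then show ?thesis using iK il ps by (intro bexI[of _ "(l, i)"]) (auto simp: Sp_def)
    next
      case False
      then show ?thesis using iK il ps t1K by (intro bexI[of _ "(t1, i)"]) (auto simp: Sp_def)
    qed
  qed
  define F where "F = map (\<lambda>p. (ES (Sp p) :: ('f ^'n) set)) ps"
  define Y1 where "Y1 = en ` {0..<k-1}"
  define Y2 where "Y2 = en ` {k-1..<2*k-2}"
  define p0 where "p0 = en (2*k-2)"
  define pk where "pk = en (2*k-1)"
  have sY1: "{0..<k-1} \<subseteq> {0..<d}" and sY2: "{k-1..<2*k-2} \<subseteq> {0..<d}" using kd by auto
  have cY1: "card Y1 = k - 1" unfolding Y1_def using card_image[OF inj_on_subset[OF inj sY1]] by simp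
  have cY2: "card Y2 = k - 1" unfolding Y2_def using card_image[OF inj_on_subset[OF inj sY2]] kd by simp
  have p0Y1: "p0 \<notin> Y1" and p0Y2: "p0 \<notin> Y2" and pkY1: "pk \<notin> Y1" and pkY2: "pk \<notin> Y2"
    and p0pk: "p0 \<noteq> pk"
    unfolding p0_def pk_def Y1_def Y2_def using en_mem[OF inj] sY1 sY2 enI kd by auto
  have Y12: "i \<notin> Y2" if iY: "i \<in> Y1" for i
  proof
    assume "i \<in> Y2"
    then obtain b where b: "i = en b" "k - 1 \<le> b" "b < 2*k-2" unfolding Y2_def by auto
    obtain a where a: "i = en a" "a < k - 1" using iY unfolding Y1_def by auto
    have "a < d" "b < d" using a b kd by linarith+
    then have "a = b" using enI[of a b] a b by simp
    then show False using a b by simp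
  qed
  obtain els :: "'f list" where els: "set els = UNIV" using finite_list[of "UNIV :: 'f set"] by auto
  define E where "E = (PY Y2 pk 1 :: ('f ^'n) set) # map (\<lambda>a. PY Y1 pk a) els"
  define x0 where "x0 = (ES K :: ('f ^'n) set)"
  have x0O: "x0 \<in> Om" unfolding x0_def Om_def using ES_k cardK by blast
  have FO: "set F \<subseteq> Om" unfolding F_def Om_def using ES_k cardSp by auto
  have c1: "card Y1 + 1 = k" "card Y2 + 1 = k" using cY1 cY2 kd by auto
  have EO: "set E \<subseteq> Om" unfolding E_def Om_def
    using PY_k[OF c1(1) p0Y1 p0pk] PY_k[OF c1(2) p0Y2 p0pk] by auto
  have sub: "set (x0 # F @ E) \<subseteq> Om" using x0O FO EO by auto
  have Gsl: "\<exists>g0. semilinear_bij g0 \<and> g = induced_perm Om g0" if "g \<in> G" for g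
    using that assms(5) unfolding PGammaL_on_def Om_def by auto
  have PSLG: "induced_perm Om (tvf a b) \<in> G" if "a \<noteq> b" for a b
    using tvg_in[OF that] assms(6) unfolding Om_def by blast
  have diagG: "\<forall>i. g0 (axis i 1) = (g0 (axis i 1) $ i) *s axis i 1"
    if sl: "semilinear_bij g0" and fx: "\<forall>p\<in>set ps. g0 ` ES (Sp p) = (ES (Sp p) :: ('f ^'n) set)"
    for g0 :: "'f ^'n \<Rightarrow> 'f ^'n"
  proof
    fix i
    obtain \<sigma> where s: "field_aut \<sigma>" "\<forall>x y. g0 (x + y) = g0 x + g0 y" "\<forall>c x. g0 (c *s x) = \<sigma> c *s g0 x" "inj g0"
      using sl_parts[OF sl] by metis
    show "g0 (axis i 1) = (g0 (axis i 1) $ i) *s axis i 1"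
    proof (rule diag_lemma[OF s(2)])
      fix i' l :: 'n assume "i' \<noteq> l"
      then obtain p where "p \<in> set ps" "i' \<in> Sp p" "l \<notin> Sp p" using sep by blast
      then show "\<exists>S. g0 ` ES S = ES S \<and> i' \<in> S \<and> l \<notin> S" using fx by blast
    qed
  qed
  have fixF: "g0 ` ES (Sp p) = ES (Sp p)"
    if "g \<in> pw_stab G F" "g = induced_perm Om g0" "p \<in> set ps" for g g0 p
  proof -
    have "ES (Sp p) \<in> set F" unfolding F_def using that(3) by auto
    then have "g (ES (Sp p)) = ES (Sp p)" using that(1) unfolding pw_stab_def by auto
    moreover have "ES (Sp p) \<in> Om" using \<open>ES (Sp p) \<in> set F\<close> FO by auto
    ultimately show ?thesis using that(2) induced_apply by metis
  qed
  have fixx: "\<forall>g \<in> pw_stab G F. g x0 = x0"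
  proof
    fix g assume g: "g \<in> pw_stab G F"
    then have "g \<in> G" unfolding pw_stab_def by auto
    then obtain g0 where g0: "semilinear_bij g0" "g = induced_perm Om g0" using Gsl by blast
    obtain \<sigma> where s: "field_aut \<sigma>" "\<forall>x y. g0 (x + y) = g0 x + g0 y" "\<forall>c x. g0 (c *s x) = \<sigma> c *s g0 x" "inj g0"
      using sl_parts[OF g0(1)] by metis
    have dg: "\<forall>i. g0 (axis i 1) = (g0 (axis i 1) $ i) *s axis i 1"
      using diagG[OF g0(1)] fixF[OF g g0(2)] by blast
    have h1: "g0 ` ES K \<subseteq> vec.span (g0 ` (\<lambda>i. axis i (1::'f)) ` K)"
      unfolding ES_def by (rule span_image_semi[OF s(2) s(3)])
    have h2: "g0 ` (\<lambda>i. axis i (1::'f)) ` K \<subseteq> ES K"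
    proof
      fix v assume "v \<in> g0 ` (\<lambda>i. axis i (1::'f)) ` K"
      then obtain i where i: "i \<in> K" "v = g0 (axis i 1)" by auto
      then have "v = (g0 (axis i 1) $ i) *s axis i 1" using dg by metis
      then show "v \<in> ES K" using ES_mem[OF i(1)] unfolding ES_def by (metis vec.span_scale)
    qed
    have h3: "vec.span (g0 ` (\<lambda>i. axis i (1::'f)) ` K) \<subseteq> ES K"
      unfolding ES_def by (rule vec.span_minimal[OF h2[unfolded ES_def]]) simp
    have "g0 ` ES K = (ES K :: ('f ^'n) set)" by (rule fin_fix[OF s(4) subset_trans[OF h1 h3]])
    then show "g x0 = x0" using g0(2) x0O induced_apply unfolding x0_def by metis
  qed
  have indF: "h (ES (Sp p)) = tvf a b ` ES (Sp p)" if "h = induced_perm Om (tvf a b)" "p \<in> set ps" for h a b p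
  proof -
    have "ES (Sp p) \<in> Om" using FO that(2) unfolding F_def by auto
    then show ?thesis using that(1) induced_apply by metis
  qed
  have strict: "\<forall>i < length (x0 # F). pw_stab G (take (Suc i) (x0 # F)) \<subset> pw_stab G (take i (x0 # F))"
  proof (intro allI impI)
    fix i assume i: "i < length (x0 # F)"
    have tk: "take (Suc i) (x0 # F) = take i (x0 # F) @ [(x0 # F) ! i]"
      by (rule take_Suc_conv_app_nth[OF i])
    show "pw_stab G (take (Suc i) (x0 # F)) \<subset> pw_stab G (take i (x0 # F))"
      unfolding tk
    proof (cases i)
      case 0
      have ne: "j1 \<noteq> t1" using j1K t1K by auto
      define h where "h = induced_perm Om (tvf j1 t1)"
      have hG: "h \<in> G" unfolding h_def by (rule PSLG[OF ne])
      have "h x0 = tvf j1 t1 ` ES K" unfolding h_def x0_def using x0O induced_apply unfolding x0_def by metis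
      also have "\<dots> \<noteq> ES K" by (rule tvf_move[OF ne t1K j1K])
      finally have "h x0 \<noteq> x0" unfolding x0_def .
      then show "pw_stab G (take i (x0 # F) @ [(x0 # F) ! i]) \<subset> pw_stab G (take i (x0 # F))"
        using 0 hG by (intro strict_step[of h]) auto
    next
      case (Suc m)
      have m: "m < length ps" using i Suc unfolding F_def by simp
      obtain t j where tj: "ps ! m = (t, j)" by fastforce
      have tjK: "t \<in> K" "j \<notin> K" using tj m ps(1) nth_mem[OF m] by auto
      have ne: "t \<noteq> j" using tjK by auto
      define h where "h = induced_perm Om (tvf t j)"
      have hG: "h \<in> G" unfolding h_def by (rule PSLG[OF ne])
      have tk2: "take i (x0 # F) = x0 # take m F" using Suc by simp
      have nth: "(x0 # F) ! i = ES (Sp (t, j))" using Suc m tj unfolding F_def by simp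
      have fix0: "h x0 = x0"
      proof -
        have "h x0 = tvf t j ` ES K" unfolding h_def x0_def using x0O induced_apply unfolding x0_def by metis
        also have "\<dots> = ES K" by (rule tvf_fix[OF ne]) (use tjK in auto)
        finally show ?thesis unfolding x0_def .
      qed
      have fixw: "h w = w" if w: "w \<in> set (take m F)" for w
      proof -
        obtain m' where m': "m' < length (take m F)" "w = take m F ! m'" using w in_set_conv_nth by metis
        have m'm: "m' < m" "m' < length ps" using m' m unfolding F_def by auto
        have w': "w = ES (Sp (ps ! m'))" using m' m'm unfolding F_def by simp
        obtain t' j' where tj': "ps ! m' = (t', j')" by fastforce
        have tjK': "t' \<in> K" "j' \<notin> K" using tj' nth_mem[OF m'm(2)] ps(1) by auto
        have neq: "(t', j') \<noteq> (t, j)" using tj tj' ps(2) m'm m nth_eq_iff_index_eq by (metis less_irrefl)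
        have cond: "j \<notin> Sp (t', j') \<or> t \<in> Sp (t', j')"
          using neq tjK tjK' unfolding Sp_def by auto
        have "h w = tvf t j ` ES (Sp (t', j'))"
          using indF[of h t j "(t', j')"] h_def w' tj' nth_mem[OF m'm(2)] by simp
        also have "\<dots> = ES (Sp (t', j'))" by (rule tvf_fix[OF ne cond])
        finally show ?thesis using w' tj' by simp
      qed
      have hst: "h \<in> pw_stab G (take i (x0 # F))"
        unfolding tk2 pw_stab_def using hG fix0 fixw by auto
      have "h (ES (Sp (t, j))) = tvf t j ` ES (Sp (t, j))"
        using indF[of h t j "(t, j)"] h_def tj nth_mem[OF m] by simp
      also have "\<dots> \<noteq> ES (Sp (t, j))"
        by (rule tvf_move[OF ne]) (use tjK in \<open>auto simp: Sp_def\<close>)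
      finally have "h ((x0 # F) ! i) \<noteq> (x0 # F) ! i" unfolding nth .
      then show "pw_stab G (take i (x0 # F) @ [(x0 # F) ! i]) \<subset> pw_stab G (take i (x0 # F))"
        by (rule strict_step[OF hst])
    qed
  qed
  have base: "pw_stab G (F @ E) = {\<one>\<^bsub>BijGroup Om\<^esub>}"
  proof
    have oneG: "\<one>\<^bsub>BijGroup Om\<^esub> \<in> G" using subgroup.one_closed[OF assms(4)] unfolding Om_def by simp
    show "{\<one>\<^bsub>BijGroup Om\<^esub>} \<subseteq> pw_stab G (F @ E)"
      using oneG FO EO unfolding pw_stab_def one_Bij by auto
  next
    show "pw_stab G (F @ E) \<subseteq> {\<one>\<^bsub>BijGroup Om\<^esub>}"
    proof
      fix g assume g: "g \<in> pw_stab G (F @ E)"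
      then have "g \<in> G" unfolding pw_stab_def by auto
      then obtain g0 where g0: "semilinear_bij g0" "g = induced_perm Om g0" using Gsl by blast
      obtain \<sigma> where s: "field_aut \<sigma>" "\<forall>x y. g0 (x + y) = g0 x + g0 y" "\<forall>c x. g0 (c *s x) = \<sigma> c *s g0 x" "inj g0"
        using sl_parts[OF g0(1)] by metis
      have gF: "g \<in> pw_stab G F" using g unfolding pw_stab_def by auto
      have dg: "\<forall>i. g0 (axis i 1) = (g0 (axis i 1) $ i) *s axis i 1"
        using diagG[OF g0(1)] fixF[OF gF g0(2)] by blast
      define c where "c = (\<lambda>i. g0 (axis i 1) $ i)"
      have dg': "\<forall>i. g0 (axis i 1) = c i *s axis i 1" using dg unfolding c_def by blast
      have form: "\<And>x. g0 x = (\<chi> i. \<sigma> (x $ i) * c i)"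
        by (rule diag_form[OF s(2) s(3) dg'])
      have fixE: "g0 ` W = W" if "W \<in> set E" for W
      proof -
        have "g W = W" using g that unfolding pw_stab_def by auto
        moreover have "W \<in> Om" using EO that by auto
        ultimately show ?thesis using g0(2) induced_apply by metis
      qed
      have s1: "\<sigma> 1 = 1" by (rule field_aut_1[OF s(1)])
      have PYc: "\<sigma> (uv Y pk a $ i) * c i = (if i = pk then a else 1) * c p0"
        if fY: "g0 ` PY Y pk a = PY Y pk a" and pY: "p0 \<notin> Y" and iY: "i \<notin> Y" for Y a i
      proof -
        have "g0 (uv Y pk a) \<in> PY Y pk a" using fY PY_u by blast
        then have "g0 (uv Y pk a) $ i = (if i = pk then a else 1) * g0 (uv Y pk a) $ p0"
          by (rule PY_pred[OF _ pY p0pk iY])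
        moreover have "uv Y pk a $ p0 = (1::'f)" using pY p0pk by (simp add: uv_def)
        ultimately show ?thesis using form s1 by simp
      qed
      have fY1: "g0 ` PY Y1 pk a = PY Y1 pk a" for a
        using fixE[of "PY Y1 pk a"] els unfolding E_def by auto
      have fY2: "g0 ` PY Y2 pk 1 = PY Y2 pk 1"
        using fixE[of "PY Y2 pk 1"] unfolding E_def by auto
      have ceq: "c i = c p0" for i
      proof (cases "i \<in> Y1")
        case True
        then have iY2: "i \<notin> Y2" using Y12 by blast
        have "uv Y2 pk 1 $ i = (1::'f)" using iY2 by (simp add: uv_def)
        then show ?thesis using PYc[OF fY2 p0Y2 iY2] s1 by (simp split: if_splits)
      next
        case False
        have "uv Y1 pk 1 $ i = (1::'f)" using False by (simp add: uv_def)
        then show ?thesis using PYc[OF fY1[of 1] p0Y1 False] s1 by (simp split: if_splits)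
      qed
      have c0: "c p0 \<noteq> 0"
      proof
        assume "c p0 = 0"
        then have "g0 (axis p0 1) = g0 0" using dg' add_0_map[OF s(2)] by simp
        then have "axis p0 (1::'f) = 0" using s(4) by (meson injD)
        then show False by (metis axis_nth zero_index zero_neq_one)
      qed
      have sid: "\<sigma> a = a" for a
      proof -
        have "uv Y1 pk a $ pk = a" using pkY1 by (simp add: uv_def)
        then have "\<sigma> a * c pk = a * c p0" using PYc[OF fY1[of a] p0Y1 pkY1] by simp
        then have "\<sigma> a * c p0 = a * c p0" using ceq[of pk] by simp
        then show ?thesis using c0 by simp
      qed
      have scal: "\<forall>x. g0 x = c p0 *s x"
      proof
        fix x
        show "g0 x = c p0 *s x" unfolding form using sid ceq by (simp add: vec_eq_iff mult.commute)
      qed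
      have "g = (\<lambda>W\<in>Om. W)"
        unfolding g0(2) induced_perm_def
      proof (rule restrict_ext)
        fix W assume "W \<in> Om"
        then have "vec.subspace W" unfolding Om_def k_subspaces_def by auto
        then show "g0 ` W = W" by (rule sl_scalar_fix[OF s(4) scal])
      qed
      then show "g \<in> {\<one>\<^bsub>BijGroup Om\<^esub>}" unfolding one_Bij by simp
    qed
  qed
  show ?thesis using not_IBIS_abs[OF base sub strict fixx] unfolding Om_def .
qed

end
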